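(* Let $M$ be an $\aleph_0$-saturated model of a complete affine theory $T$. Then a predicate $P:M^n\to\mathbb R$ is definable if and only if both $P$ and $-P$ have type-definable epigraphs.
   Context: Affine continuous logic: $L$-structures are complete metric spaces $(M,d)$ with $d\le1$ and Lipschitz interpretations of function symbols and $[0,1]$-valued relation symbols. Affine formulas are built from $1$ and atomic formulas (including $d$) using only $r\cdot\phi$ ($r\in\mathbb R$), $\phi+\psi$, $\inf_x$, $\sup_x$. $M$ is $\aleph_0$-saturated if every type over a finite subset of $M$ (maximal set of conditions with those parameters satisfiable with the theory of $M$ with those parameters named) is realized in $M$. A predicate $P:M^n\to\mathbb R$ is definable (without parameters) if there are affine formulas $\phi_k(\bar x)$ with $\phi_k^M\to P$ uniformly on $M^n$. The epigraph of $P$ is $\mathrm{epi}(P)=\{(\bar a,r)\in M^n\times\mathbb R:P(\bar a)\le r\}$. $P$ has a type-definable epigraph if there is a set $\Phi(\bar x)$ of affine formulas (without parameters) such that $\mathrm{epi}(P)=\{(\bar a,r):\phi^M(\bar a)\le r\text{ for every }\phi\in\Phi\}$. *)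

theory Defs
  imports Complex_Main
begin

record ('f, 'r) lang =
  farity :: "'f \<Rightarrow> nat"
  rarity :: "'r \<Rightarrow> nat"

datatype 'f trm = Var nat | Fn 'f "'f trm list"

datatype ('f, 'r) afml =
    One
  | Rel 'r "'f trm list"
  | Dst "'f trm" "'f trm"
  | Scl real "('f, 'r) afml"
  | Plus "('f, 'r) afml" "('f, 'r) afml"
  | Inf nat "('f, 'r) afml"
  | Sup nat "('f, 'r) afml"

fun wf_trm :: "('f, 'r) lang \<Rightarrow> 'f trm \<Rightarrow> bool" where
  "wf_trm L (Var i) = True"
| "wf_trm L (Fn f ts) = (length ts = farity L f \<and> (\<forall>t\<in>set ts. wf_trm L t))"

fun wf_fml :: "('f, 'r) lang \<Rightarrow> ('f, 'r) afml \<Rightarrow> bool" where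
  "wf_fml L One = True"
| "wf_fml L (Rel r ts) = (length ts = rarity L r \<and> (\<forall>t\<in>set ts. wf_trm L t))"
| "wf_fml L (Dst s t) = (wf_trm L s \<and> wf_trm L t)"
| "wf_fml L (Scl c \<phi>) = wf_fml L \<phi>"
| "wf_fml L (Plus \<phi> \<psi>) = (wf_fml L \<phi> \<and> wf_fml L \<psi>)"
| "wf_fml L (Inf x \<phi>) = wf_fml L \<phi>"
| "wf_fml L (Sup x \<phi>) = wf_fml L \<phi>"

fun fv_trm :: "'f trm \<Rightarrow> nat set" where
  "fv_trm (Var i) = {i}"
| "fv_trm (Fn f ts) = (\<Union>t\<in>set ts. fv_trm t)"

fun fv :: "('f, 'r) afml \<Rightarrow> nat set" where
  "fv One = {}"
| "fv (Rel r ts) = (\<Union>t\<in>set ts. fv_trm t)"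
| "fv (Dst s t) = fv_trm s \<union> fv_trm t"
| "fv (Scl c \<phi>) = fv \<phi>"
| "fv (Plus \<phi> \<psi>) = fv \<phi> \<union> fv \<psi>"
| "fv (Inf x \<phi>) = fv \<phi> - {x}"
| "fv (Sup x \<phi>) = fv \<phi> - {x}"

record ('a, 'f, 'r) struct =
  carr :: "'a set"
  dst :: "'a \<Rightarrow> 'a \<Rightarrow> real"
  fun_i :: "'f \<Rightarrow> 'a list \<Rightarrow> 'a"
  rel_i :: "'r \<Rightarrow> 'a list \<Rightarrow> real"

definition tuple_dist :: "('a \<Rightarrow> 'a \<Rightarrow> real) \<Rightarrow> 'a list \<Rightarrow> 'a list \<Rightarrow> real" where
  "tuple_dist d xs ys = Max (insert 0 {d (xs ! i) (ys ! i) | i. i < length xs})"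

definition tuples :: "('a, 'f, 'r) struct \<Rightarrow> nat \<Rightarrow> 'a list set" where
  "tuples M n = {xs. set xs \<subseteq> carr M \<and> length xs = n}"

definition is_structure :: "('f, 'r) lang \<Rightarrow> ('a, 'f, 'r) struct \<Rightarrow> bool" where
  "is_structure L M \<longleftrightarrow>
     carr M \<noteq> {}
   \<and> (\<forall>x\<in>carr M. \<forall>y\<in>carr M. 0 \<le> dst M x y \<and> dst M x y \<le> 1
        \<and> (dst M x y = 0 \<longleftrightarrow> x = y) \<and> dst M x y = dst M y x)
   \<and> (\<forall>x\<in>carr M. \<forall>y\<in>carr M. \<forall>z\<in>carr M. dst M x z \<le> dst M x y + dst M y z)
   \<and> (\<forall>s :: nat \<Rightarrow> 'a. (\<forall>k. s k \<in> carr M) \<longrightarrow>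
        (\<forall>\<epsilon>>0. \<exists>N. \<forall>j\<ge>N. \<forall>k\<ge>N. dst M (s j) (s k) < \<epsilon>) \<longrightarrow>
        (\<exists>x\<in>carr M. \<forall>\<epsilon>>0. \<exists>N. \<forall>k\<ge>N. dst M (s k) x < \<epsilon>))
   \<and> (\<forall>f. (\<forall>xs\<in>tuples M (farity L f). fun_i M f xs \<in> carr M)
        \<and> (\<exists>C. \<forall>xs\<in>tuples M (farity L f). \<forall>ys\<in>tuples M (farity L f).
              dst M (fun_i M f xs) (fun_i M f ys) \<le> C * tuple_dist (dst M) xs ys))
   \<and> (\<forall>r. (\<forall>xs\<in>tuples M (rarity L r). 0 \<le> rel_i M r xs \<and> rel_i M r xs \<le> 1)
        \<and> (\<exists>C. \<forall>xs\<in>tuples M (rarity L r). \<forall>ys\<in>tuples M (rarity L r).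
              \<bar>rel_i M r xs - rel_i M r ys\<bar> \<le> C * tuple_dist (dst M) xs ys))"

fun eval_trm :: "('a, 'f, 'r) struct \<Rightarrow> (nat \<Rightarrow> 'a) \<Rightarrow> 'f trm \<Rightarrow> 'a" where
  "eval_trm M \<sigma> (Var i) = \<sigma> i"
| "eval_trm M \<sigma> (Fn f ts) = fun_i M f (map (eval_trm M \<sigma>) ts)"

fun eval :: "('a, 'f, 'r) struct \<Rightarrow> (nat \<Rightarrow> 'a) \<Rightarrow> ('f, 'r) afml \<Rightarrow> real" where
  "eval M \<sigma> One = 1"
| "eval M \<sigma> (Rel r ts) = rel_i M r (map (eval_trm M \<sigma>) ts)"
| "eval M \<sigma> (Dst s t) = dst M (eval_trm M \<sigma> s) (eval_trm M \<sigma> t)"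
| "eval M \<sigma> (Scl c \<phi>) = c * eval M \<sigma> \<phi>"
| "eval M \<sigma> (Plus \<phi> \<psi>) = eval M \<sigma> \<phi> + eval M \<sigma> \<psi>"
| "eval M \<sigma> (Inf x \<phi>) = (INF b\<in>carr M. eval M (\<sigma>(x := b)) \<phi>)"
| "eval M \<sigma> (Sup x \<phi>) = (SUP b\<in>carr M. eval M (\<sigma>(x := b)) \<phi>)"

definition asg :: "('a, 'f, 'r) struct \<Rightarrow> 'a list \<Rightarrow> nat \<Rightarrow> 'a" where
  "asg M xs i = (if i < length xs then xs ! i else (SOME a. a \<in> carr M))"

text \<open>A condition "phi(x_0..x_{m-1}, a_0..a_{k-1}) <= r" with parameters as = [a_0..a_{k-1}]
  is a pair (phi, r), where variables 0..m-1 are the type variables and m..m+k-1 the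
  parameters.\<close>
definition cond_ok :: "('f, 'r) lang \<Rightarrow> nat \<Rightarrow> nat \<Rightarrow> ('f, 'r) afml \<times> real \<Rightarrow> bool" where
  "cond_ok L m k c \<longleftrightarrow> wf_fml L (fst c) \<and> fv (fst c) \<subseteq> {..<m + k}"

text \<open>Satisfiability of a set of conditions with the (complete affine) theory of M with the
  parameters named: for every finite subset and nonnegative weights, the infimum over M^m of the
  weighted sum of (phi - r) is <= 0 (affine compactness).\<close>
definition consistent_with :: "('a, 'f, 'r) struct \<Rightarrow> nat \<Rightarrow> 'a list \<Rightarrow>
    (('f, 'r) afml \<times> real) set \<Rightarrow> bool" where
  "consistent_with M m as \<Sigma> \<longleftrightarrow>
     (\<forall>F w. F \<subseteq> \<Sigma> \<longrightarrow> finite F \<longrightarrow> (\<forall>c\<in>F. 0 \<le> (w c :: real)) \<longrightarrow>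
        (INF bs\<in>tuples M m. \<Sum>c\<in>F. w c * (eval M (asg M (bs @ as)) (fst c) - snd c)) \<le> 0)"

definition is_type :: "('f, 'r) lang \<Rightarrow> ('a, 'f, 'r) struct \<Rightarrow> nat \<Rightarrow> 'a list \<Rightarrow>
    (('f, 'r) afml \<times> real) set \<Rightarrow> bool" where
  "is_type L M m as \<Sigma> \<longleftrightarrow>
     (\<forall>c\<in>\<Sigma>. cond_ok L m (length as) c) \<and> consistent_with M m as \<Sigma>
   \<and> (\<forall>\<Sigma>'. \<Sigma> \<subseteq> \<Sigma>' \<longrightarrow> (\<forall>c\<in>\<Sigma>'. cond_ok L m (length as) c) \<longrightarrow>
        consistent_with M m as \<Sigma>' \<longrightarrow> \<Sigma>' = \<Sigma>)"

definition aleph0_saturated :: "('f, 'r) lang \<Rightarrow> ('a, 'f, 'r) struct \<Rightarrow> bool" where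
  "aleph0_saturated L M \<longleftrightarrow>
     (\<forall>m as \<Sigma>. set as \<subseteq> carr M \<longrightarrow> is_type L M m as \<Sigma> \<longrightarrow>
        (\<exists>bs\<in>tuples M m. \<forall>c\<in>\<Sigma>. eval M (asg M (bs @ as)) (fst c) \<le> snd c))"

definition definable :: "('f, 'r) lang \<Rightarrow> ('a, 'f, 'r) struct \<Rightarrow> nat \<Rightarrow> ('a list \<Rightarrow> real) \<Rightarrow> bool" where
  "definable L M n P \<longleftrightarrow>
     (\<exists>\<phi> :: nat \<Rightarrow> ('f, 'r) afml.
        (\<forall>k. wf_fml L (\<phi> k) \<and> fv (\<phi> k) \<subseteq> {..<n})
      \<and> (\<forall>\<epsilon>>0. \<exists>K. \<forall>k\<ge>K. \<forall>xs\<in>tuples M n. \<bar>eval M (asg M xs) (\<phi> k) - P xs\<bar> < \<epsilon>))"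

definition type_definable_epigraph :: "('f, 'r) lang \<Rightarrow> ('a, 'f, 'r) struct \<Rightarrow> nat \<Rightarrow>
    ('a list \<Rightarrow> real) \<Rightarrow> bool" where
  "type_definable_epigraph L M n P \<longleftrightarrow>
     (\<exists>\<Phi> :: ('f, 'r) afml set.
        (\<forall>\<phi>\<in>\<Phi>. wf_fml L \<phi> \<and> fv \<phi> \<subseteq> {..<n})
      \<and> (\<forall>xs\<in>tuples M n. \<forall>r::real. P xs \<le> r \<longleftrightarrow> (\<forall>\<phi>\<in>\<Phi>. eval M (asg M xs) \<phi> \<le> r)))"

end

theory Submission
  imports Defs
begin

lemma eval_trm_carr:
  assumes S: "is_structure L M" and "wf_trm L t" and "\<forall>i. \<sigma> i \<in> carr M"
  shows "eval_trm M \<sigma> t \<in> carr M"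
  using assms(2)
proof (induction t)
  case (Var x)
  then show ?case using assms(3) by simp
next
  case (Fn f ts)
  have "map (eval_trm M \<sigma>) ts \<in> tuples M (farity L f)"
    using Fn by (auto simp: tuples_def)
  then show ?case using S unfolding is_structure_def by auto
qed

lemma INF_abs_bound:
  fixes f :: "'b \<Rightarrow> real"
  assumes "S \<noteq> {}" "\<forall>b\<in>S. \<bar>f b\<bar> \<le> B"
  shows "\<bar>INF b\<in>S. f b\<bar> \<le> B" "\<bar>SUP b\<in>S. f b\<bar> \<le> B"
proof -
  have bb: "bdd_below (f ` S)" "bdd_above (f ` S)"
    using assms(2) by (auto intro!: bdd_belowI[of _ "-B"] bdd_aboveI[of _ B] simp: abs_le_iff)
  obtain b where b: "b \<in> S" using assms(1) by auto
  have "(INF b\<in>S. f b) \<le> f b" using bb b by (simp add: cINF_lower)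
  moreover have "(INF b\<in>S. f b) \<ge> -B" using assms by (intro cINF_greatest) (auto simp: abs_le_iff)
  moreover have "f b \<le> B" using assms b by (auto simp: abs_le_iff)
  ultimately show "\<bar>INF b\<in>S. f b\<bar> \<le> B" by auto
  have "(SUP b\<in>S. f b) \<ge> f b" using bb b by (simp add: cSUP_upper)
  moreover have "(SUP b\<in>S. f b) \<le> B" using assms by (intro cSUP_least) (auto simp: abs_le_iff)
  moreover have "f b \<ge> -B" using assms b by (auto simp: abs_le_iff)
  ultimately show "\<bar>SUP b\<in>S. f b\<bar> \<le> B" by auto
qed

lemma eval_bounded:
  assumes S: "is_structure L M" and "wf_fml L \<phi>"
  shows "\<exists>B. \<forall>\<sigma>. (\<forall>i. \<sigma> i \<in> carr M) \<longrightarrow> \<bar>eval M \<sigma> \<phi>\<bar> \<le> B"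
  using assms(2)
proof (induction \<phi>)
  case One
  then show ?case by auto
next
  case (Rel r ts)
  { fix \<sigma> :: "nat \<Rightarrow> _" assume "\<forall>i. \<sigma> i \<in> carr M"
    then have "map (eval_trm M \<sigma>) ts \<in> tuples M (rarity L r)"
      using Rel eval_trm_carr[OF S] by (auto simp: tuples_def)
    then have "\<bar>eval M \<sigma> (Rel r ts)\<bar> \<le> 1" using S unfolding is_structure_def by auto }
  then show ?case by blast
next
  case (Dst s t)
  { fix \<sigma> :: "nat \<Rightarrow> _" assume "\<forall>i. \<sigma> i \<in> carr M"
    then have "eval_trm M \<sigma> s \<in> carr M" "eval_trm M \<sigma> t \<in> carr M"
      using Dst eval_trm_carr[OF S] by auto
    then have "\<bar>eval M \<sigma> (Dst s t)\<bar> \<le> 1" using S unfolding is_structure_def by auto }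
  then show ?case by blast
next
  case (Scl c \<phi>)
  then obtain B where B: "\<forall>\<sigma>. (\<forall>i. \<sigma> i \<in> carr M) \<longrightarrow> \<bar>eval M \<sigma> \<phi>\<bar> \<le> B" by auto
  { fix \<sigma> :: "nat \<Rightarrow> _" assume "\<forall>i. \<sigma> i \<in> carr M"
    then have "\<bar>eval M \<sigma> (Scl c \<phi>)\<bar> \<le> \<bar>c\<bar> * B" using B
      by (simp add: abs_mult mult_left_mono) }
  then show ?case by blast
next
  case (Plus \<phi> \<psi>)
  then obtain B1 B2 where B: "\<forall>\<sigma>. (\<forall>i. \<sigma> i \<in> carr M) \<longrightarrow> \<bar>eval M \<sigma> \<phi>\<bar> \<le> B1"
     "\<forall>\<sigma>. (\<forall>i. \<sigma> i \<in> carr M) \<longrightarrow> \<bar>eval M \<sigma> \<psi>\<bar> \<le> B2" by auto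
  { fix \<sigma> :: "nat \<Rightarrow> _" assume "\<forall>i. \<sigma> i \<in> carr M"
    then have "\<bar>eval M \<sigma> (Plus \<phi> \<psi>)\<bar> \<le> B1 + B2" using B
      by (simp add: abs_triangle_ineq order_trans[OF abs_triangle_ineq] add_mono) }
  then show ?case by blast
next
  case (Inf x \<phi>)
  then obtain B where B: "\<forall>\<sigma>. (\<forall>i. \<sigma> i \<in> carr M) \<longrightarrow> \<bar>eval M \<sigma> \<phi>\<bar> \<le> B" by auto
  have ne: "carr M \<noteq> {}" using S unfolding is_structure_def by auto
  { fix \<sigma> :: "nat \<Rightarrow> _" assume s: "\<forall>i. \<sigma> i \<in> carr M"
    have "\<forall>b\<in>carr M. \<bar>eval M (\<sigma>(x := b)) \<phi>\<bar> \<le> B" using B s by auto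
    then have "\<bar>eval M \<sigma> (Inf x \<phi>)\<bar> \<le> B" using INF_abs_bound[OF ne] by simp }
  then show ?case by blast
next
  case (Sup x \<phi>)
  then obtain B where B: "\<forall>\<sigma>. (\<forall>i. \<sigma> i \<in> carr M) \<longrightarrow> \<bar>eval M \<sigma> \<phi>\<bar> \<le> B" by auto
  have ne: "carr M \<noteq> {}" using S unfolding is_structure_def by auto
  { fix \<sigma> :: "nat \<Rightarrow> _" assume s: "\<forall>i. \<sigma> i \<in> carr M"
    have "\<forall>b\<in>carr M. \<bar>eval M (\<sigma>(x := b)) \<phi>\<bar> \<le> B" using B s by auto
    then have "\<bar>eval M \<sigma> (Sup x \<phi>)\<bar> \<le> B" using INF_abs_bound[OF ne] by simp }
  then show ?case by blast
qed

lemma asg_carr: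
  assumes S: "is_structure L M" and "xs \<in> tuples M n"
  shows "\<forall>i. asg M xs i \<in> carr M"
proof -
  have ne: "\<exists>a. a \<in> carr M" using S unfolding is_structure_def by auto
  show ?thesis using assms(2) someI_ex[OF ne] by (auto simp: asg_def tuples_def)
qed

lemma sum_bounded:
  fixes g :: "'c \<Rightarrow> 'x \<Rightarrow> real"
  assumes "finite F" "\<forall>c\<in>F. \<exists>B. \<forall>x\<in>X. \<bar>g c x\<bar> \<le> B"
  shows "\<exists>B. \<forall>x\<in>X. \<bar>\<Sum>c\<in>F. g c x\<bar> \<le> B"
  using assms
proof (induction F rule: finite_induct)
  case empty
  then show ?case by auto
next
  case (insert a F)
  then obtain B1 B2 where "\<forall>x\<in>X. \<bar>g a x\<bar> \<le> B1" "\<forall>x\<in>X. \<bar>\<Sum>c\<in>F. g c x\<bar> \<le> B2" by auto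
  then have "\<forall>x\<in>X. \<bar>\<Sum>c\<in>insert a F. g c x\<bar> \<le> B1 + B2" using insert
    by (auto intro: order_trans[OF abs_triangle_ineq] add_mono)
  then show ?case by blast
qed

lemma fml_sum:
  assumes "finite F" "\<forall>c\<in>F. wf_fml L (g c) \<and> fv (g c) \<subseteq> V"
  shows "\<exists>\<chi>. wf_fml L \<chi> \<and> fv \<chi> \<subseteq> V \<and> (\<forall>\<sigma>. eval M \<sigma> \<chi> = (\<Sum>c\<in>F. eval M \<sigma> (g c)))"
  using assms
proof (induction F rule: finite_induct)
  case empty
  show ?case by (rule exI[of _ "Scl 0 One"]) simp
next
  case (insert a F)
  then obtain \<chi> where "wf_fml L \<chi> \<and> fv \<chi> \<subseteq> V \<and> (\<forall>\<sigma>. eval M \<sigma> \<chi> = (\<Sum>c\<in>F. eval M \<sigma> (g c)))"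
    by auto
  then show ?case using insert by (intro exI[of _ "Plus (g a) \<chi>"]) auto
qed

lemma realize:
  assumes S: "is_structure L M" and sat: "aleph0_saturated L M"
    and ok: "\<forall>c\<in>\<Sigma>. cond_ok L n 0 c" and con: "consistent_with M n [] \<Sigma>"
  shows "\<exists>bs\<in>tuples M n. \<forall>c\<in>\<Sigma>. eval M (asg M bs) (fst c) \<le> snd c"
proof -
  define A where "A = {\<Sigma>'. \<Sigma> \<subseteq> \<Sigma>' \<and> (\<forall>c\<in>\<Sigma>'. cond_ok L n 0 c) \<and> consistent_with M n [] \<Sigma>'}"
  have "\<exists>T\<in>A. \<forall>X\<in>A. T \<subseteq> X \<longrightarrow> X = T"
  proof (rule subset_Zorn_nonempty)
    show "A \<noteq> {}" using ok con unfolding A_def by auto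
  next
    fix C assume C: "C \<noteq> {}" "subset.chain A C"
    have CA: "C \<subseteq> A" using C(2) by (simp add: subset_chain_def)
    have "\<Sigma> \<subseteq> \<Union>C" using C CA unfolding A_def by auto
    moreover have "\<forall>c\<in>\<Union>C. cond_ok L n 0 c" using CA unfolding A_def by auto
    moreover have "consistent_with M n [] (\<Union>C)"
      unfolding consistent_with_def
    proof (intro allI impI)
      fix F w assume F: "F \<subseteq> \<Union>C" "finite F" "\<forall>c\<in>F. 0 \<le> (w c :: real)"
      obtain B where B: "B \<in> C" "F \<subseteq> B" using finite_subset_Union_chain[OF F(2) F(1) C(1) C(2)] by blast
      have "consistent_with M n [] B" using B CA unfolding A_def by auto
      then show "(INF bs\<in>tuples M n. \<Sum>c\<in>F. w c * (eval M (asg M (bs @ [])) (fst c) - snd c)) \<le> 0"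
        using F B unfolding consistent_with_def by auto
    qed
    ultimately show "\<Union>C \<in> A" unfolding A_def by auto
  qed
  then obtain T where T: "T \<in> A" "\<forall>X\<in>A. T \<subseteq> X \<longrightarrow> X = T" by blast
  have "is_type L M n [] T"
    unfolding is_type_def using T unfolding A_def by auto
  then obtain bs where "bs \<in> tuples M n" "\<forall>c\<in>T. eval M (asg M (bs @ [])) (fst c) \<le> snd c"
    using sat unfolding aleph0_saturated_def by (metis empty_set empty_subsetI)
  then show ?thesis using T(1) unfolding A_def by auto
qed

lemma def_neg:
  fixes L :: "('f, 'r) lang" and M :: "('a, 'f, 'r) struct"
  assumes "definable L M n P"
  shows "definable L M n (\<lambda>xs. - P xs)"
proof -
  obtain \<phi> :: "nat \<Rightarrow> ('f, 'r) afml" where \<phi>: "\<forall>k. wf_fml L (\<phi> k) \<and> fv (\<phi> k) \<subseteq> {..<n}"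
    "\<forall>\<epsilon>>0. \<exists>K. \<forall>k\<ge>K. \<forall>xs\<in>tuples M n. \<bar>eval M (asg M xs) (\<phi> k) - P xs\<bar> < \<epsilon>"
    using assms unfolding definable_def by auto
  have "\<forall>\<epsilon>>0. \<exists>K. \<forall>k\<ge>K. \<forall>xs\<in>tuples M n. \<bar>eval M (asg M xs) (Scl (-1) (\<phi> k)) - (- P xs)\<bar> < \<epsilon>"
  proof (intro allI impI)
    fix \<epsilon> :: real assume "\<epsilon> > 0"
    then obtain K where "\<forall>k\<ge>K. \<forall>xs\<in>tuples M n. \<bar>eval M (asg M xs) (\<phi> k) - P xs\<bar> < \<epsilon>"
      using \<phi>(2) by blast
    then show "\<exists>K. \<forall>k\<ge>K. \<forall>xs\<in>tuples M n. \<bar>eval M (asg M xs) (Scl (-1) (\<phi> k)) - (- P xs)\<bar> < \<epsilon>"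
      by (intro exI[of _ K]) (auto simp: abs_minus_commute)
  qed
  then show ?thesis unfolding definable_def using \<phi>(1)
    by (intro exI[of _ "\<lambda>k. Scl (-1) (\<phi> k)"]) auto
qed

lemma def_epi:
  fixes L :: "('f, 'r) lang" and M :: "('a, 'f, 'r) struct"
  assumes "definable L M n P"
  shows "type_definable_epigraph L M n P"
proof -
  obtain \<phi> :: "nat \<Rightarrow> ('f, 'r) afml" where \<phi>: "\<forall>k. wf_fml L (\<phi> k) \<and> fv (\<phi> k) \<subseteq> {..<n}"
    "\<forall>\<epsilon>>0. \<exists>K. \<forall>k\<ge>K. \<forall>xs\<in>tuples M n. \<bar>eval M (asg M xs) (\<phi> k) - P xs\<bar> < \<epsilon>"
    using assms unfolding definable_def by auto
  define \<Phi> where "\<Phi> = {Plus (\<phi> k) (Scl (-c) One) | k c.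
      \<forall>xs\<in>tuples M n. eval M (asg M xs) (\<phi> k) - c \<le> P xs}"
  have wf: "\<forall>\<chi>\<in>\<Phi>. wf_fml L \<chi> \<and> fv \<chi> \<subseteq> {..<n}" using \<phi>(1) unfolding \<Phi>_def by fastforce
  have "\<forall>xs\<in>tuples M n. \<forall>r::real. P xs \<le> r \<longleftrightarrow> (\<forall>\<chi>\<in>\<Phi>. eval M (asg M xs) \<chi> \<le> r)"
  proof (intro ballI allI iffI)
    fix xs r \<chi> assume "xs \<in> tuples M n" "P xs \<le> r" "\<chi> \<in> \<Phi>"
    then show "eval M (asg M xs) \<chi> \<le> r" unfolding \<Phi>_def by auto
  next
    fix xs r assume xs: "xs \<in> tuples M n" and all: "\<forall>\<chi>\<in>\<Phi>. eval M (asg M xs) \<chi> \<le> r"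
    show "P xs \<le> r"
    proof (rule ccontr)
      assume "\<not> P xs \<le> r"
      define e where "e = (P xs - r) / 2"
      have e: "e > 0" using \<open>\<not> P xs \<le> r\<close> unfolding e_def by simp
      then obtain K where K: "\<forall>ys\<in>tuples M n. \<bar>eval M (asg M ys) (\<phi> K) - P ys\<bar> < e"
        using \<phi>(2) by blast
      have "Plus (\<phi> K) (Scl (-e) One) \<in> \<Phi>" unfolding \<Phi>_def using K
        by (auto simp: abs_less_iff intro!: exI[of _ K] exI[of _ e] less_imp_le)
      then have "eval M (asg M xs) (\<phi> K) - e \<le> r" using all by auto
      moreover have "eval M (asg M xs) (\<phi> K) > P xs - e" using K xs by (auto simp: abs_less_iff)
      ultimately show False unfolding e_def by (simp add: field_simps)
    qed
  qed
  then show ?thesis unfolding type_definable_epigraph_def using wf by blast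
qed

fun lft :: "('f, 'r) afml \<Rightarrow> ('f, 'r) afml" where
  "lft (Plus a b) = a"
| "lft _ = One"

fun rgt :: "('f, 'r) afml \<Rightarrow> ('f, 'r) afml" where
  "rgt (Plus a b) = b"
| "rgt _ = One"

lemma approx:
  fixes L :: "('f, 'r) lang" and M :: "('a, 'f, 'r) struct"
  assumes S: "is_structure L M" and sat: "aleph0_saturated L M"
    and Phi: "\<forall>\<phi>\<in>\<Phi>. wf_fml L \<phi> \<and> fv \<phi> \<subseteq> {..<n}"
      "\<forall>xs\<in>tuples M n. \<forall>r::real. P xs \<le> r \<longleftrightarrow> (\<forall>\<phi>\<in>\<Phi>. eval M (asg M xs) \<phi> \<le> r)"
    and Psi: "\<forall>\<phi>\<in>\<Psi>. wf_fml L \<phi> \<and> fv \<phi> \<subseteq> {..<n}"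
      "\<forall>xs\<in>tuples M n. \<forall>r::real. - P xs \<le> r \<longleftrightarrow> (\<forall>\<phi>\<in>\<Psi>. eval M (asg M xs) \<phi> \<le> r)"
    and e: "(\<epsilon>::real) > 0"
  shows "\<exists>\<chi>. wf_fml L \<chi> \<and> fv \<chi> \<subseteq> {..<n} \<and>
     (\<forall>xs\<in>tuples M n. P xs - \<epsilon> < eval M (asg M xs) \<chi> \<and> eval M (asg M xs) \<chi> \<le> P xs)"
proof -
  define \<Sigma> where "\<Sigma> = {(Plus \<phi> \<psi>, -\<epsilon>) | \<phi> \<psi>. \<phi> \<in> \<Phi> \<and> \<psi> \<in> \<Psi>}"
  have ok: "\<forall>c\<in>\<Sigma>. cond_ok L n 0 c" using Phi(1) Psi(1) unfolding \<Sigma>_def cond_ok_def by (auto simp: subset_iff)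
  have Phi_le: "eval M (asg M xs) \<phi> \<le> P xs" if "xs \<in> tuples M n" "\<phi> \<in> \<Phi>" for xs \<phi>
    using Phi(2) that by blast
  have Psi_le: "eval M (asg M xs) \<psi> \<le> - P xs" if "xs \<in> tuples M n" "\<psi> \<in> \<Psi>" for xs \<psi>
    using Psi(2) that by blast
  have "\<not> (\<exists>bs\<in>tuples M n. \<forall>c\<in>\<Sigma>. eval M (asg M bs) (fst c) \<le> snd c)"
  proof
    assume "\<exists>bs\<in>tuples M n. \<forall>c\<in>\<Sigma>. eval M (asg M bs) (fst c) \<le> snd c"
    then obtain bs where bs: "bs \<in> tuples M n" "\<forall>c\<in>\<Sigma>. eval M (asg M bs) (fst c) \<le> snd c" by blast
    have "\<not> P bs \<le> P bs - \<epsilon>/2" using e by simp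
    then obtain \<phi> where \<phi>: "\<phi> \<in> \<Phi>" "eval M (asg M bs) \<phi> > P bs - \<epsilon>/2"
      using Phi(2) bs(1) by force
    have "\<not> - P bs \<le> - P bs - \<epsilon>/2" using e by simp
    then obtain \<psi> where \<psi>: "\<psi> \<in> \<Psi>" "eval M (asg M bs) \<psi> > - P bs - \<epsilon>/2"
      using Psi(2) bs(1) by force
    have "(Plus \<phi> \<psi>, -\<epsilon>) \<in> \<Sigma>" unfolding \<Sigma>_def using \<phi> \<psi> by auto
    then have "eval M (asg M bs) \<phi> + eval M (asg M bs) \<psi> \<le> -\<epsilon>" using bs(2) by fastforce
    then show False using \<phi> \<psi> by linarith
  qed
  then have "\<not> consistent_with M n [] \<Sigma>" using realize[OF S sat ok] by blast
  then obtain F w where F: "F \<subseteq> \<Sigma>" "finite F" "\<forall>c\<in>F. 0 \<le> (w c :: real)"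
    and pos: "(INF bs\<in>tuples M n. \<Sum>c\<in>F. w c * (eval M (asg M (bs @ [])) (fst c) - snd c)) > 0"
    unfolding consistent_with_def by (auto simp: not_le)
  define g where "g bs = (\<Sum>c\<in>F. w c * (eval M (asg M bs) (fst c) - snd c))" for bs
  have pos': "(INF bs\<in>tuples M n. g bs) > 0" using pos unfolding g_def by simp
  have "\<forall>c\<in>F. \<exists>B. \<forall>bs\<in>tuples M n. \<bar>w c * (eval M (asg M bs) (fst c) - snd c)\<bar> \<le> B"
  proof
    fix c assume "c \<in> F"
    then have "wf_fml L (fst c)" using F ok unfolding cond_ok_def by auto
    then obtain B where B: "\<forall>\<sigma>. (\<forall>i. \<sigma> i \<in> carr M) \<longrightarrow> \<bar>eval M \<sigma> (fst c)\<bar> \<le> B"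
      using eval_bounded[OF S] by blast
    have "\<forall>bs\<in>tuples M n. \<bar>w c * (eval M (asg M bs) (fst c) - snd c)\<bar> \<le> \<bar>w c\<bar> * (B + \<bar>snd c\<bar>)"
    proof
      fix bs assume "bs \<in> tuples M n"
      then have "\<bar>eval M (asg M bs) (fst c)\<bar> \<le> B" using B asg_carr[OF S, of bs n] by simp
      then have "\<bar>eval M (asg M bs) (fst c) - snd c\<bar> \<le> B + \<bar>snd c\<bar>" by linarith
      then show "\<bar>w c * (eval M (asg M bs) (fst c) - snd c)\<bar> \<le> \<bar>w c\<bar> * (B + \<bar>snd c\<bar>)"
        by (simp add: abs_mult mult_left_mono)
    qed
    then show "\<exists>B. \<forall>bs\<in>tuples M n. \<bar>w c * (eval M (asg M bs) (fst c) - snd c)\<bar> \<le> B" by blast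
  qed
  from sum_bounded[OF F(2) this] obtain B where B: "\<forall>bs\<in>tuples M n. \<bar>g bs\<bar> \<le> B"
    unfolding g_def by (elim exE) simp
  have bdd: "bdd_below (g ` tuples M n)"
    using B by (intro bdd_belowI[of _ "-B"]) (auto simp: abs_le_iff)
  have gpos: "g bs > 0" if "bs \<in> tuples M n" for bs
    using cINF_lower[OF bdd that] pos' by linarith
  obtain a where a: "a \<in> carr M" using S unfolding is_structure_def by auto
  have rep: "replicate n a \<in> tuples M n" using a by (auto simp: tuples_def)
  have Fdec: "fst c = Plus (lft (fst c)) (rgt (fst c)) \<and> lft (fst c) \<in> \<Phi> \<and> rgt (fst c) \<in> \<Psi> \<and> snd c = -\<epsilon>"
    if "c \<in> F" for c using that F(1) unfolding \<Sigma>_def by auto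
  define W where "W = (\<Sum>c\<in>F. w c)"
  have "W \<noteq> 0"
  proof
    assume "W = 0"
    then have "\<forall>c\<in>F. w c = 0" using F(2,3) sum_nonneg_eq_0_iff unfolding W_def by blast
    then have "g (replicate n a) = 0" unfolding g_def by simp
    then show False using gpos[OF rep] by simp
  qed
  moreover have "W \<ge> 0" unfolding W_def using F(3) by (simp add: sum_nonneg)
  ultimately have Wpos: "W > 0" by simp
  obtain \<chi> where \<chi>: "wf_fml L \<chi>" "fv \<chi> \<subseteq> {..<n}"
    "\<forall>\<sigma>. eval M \<sigma> \<chi> = (\<Sum>c\<in>F. eval M \<sigma> (Scl (w c / W) (lft (fst c))))"
    using fml_sum[OF F(2), of L "\<lambda>c. Scl (w c / W) (lft (fst c))" "{..<n}" M] Fdec Phi(1)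
    by auto
  have "\<forall>xs\<in>tuples M n. P xs - \<epsilon> < eval M (asg M xs) \<chi> \<and> eval M (asg M xs) \<chi> \<le> P xs"
  proof
    fix xs assume xs: "xs \<in> tuples M n"
    let ?f = "\<lambda>c. eval M (asg M xs) (lft (fst c))"
    let ?h = "\<lambda>c. eval M (asg M xs) (rgt (fst c))"
    have ev: "eval M (asg M xs) \<chi> = (\<Sum>c\<in>F. w c * ?f c) / W"
      using \<chi>(3) by (simp add: sum_divide_distrib)
    have "g xs = (\<Sum>c\<in>F. w c * (?f c + ?h c + \<epsilon>))"
      unfolding g_def
    proof (rule sum.cong[OF refl])
      fix c assume c: "c \<in> F"
      have e1: "eval M (asg M xs) (fst c) = ?f c + ?h c" using Fdec[OF c] by (metis eval.simps(5))
      have e2: "snd c = -\<epsilon>" using Fdec[OF c] by blast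
      show "w c * (eval M (asg M xs) (fst c) - snd c) = w c * (?f c + ?h c + \<epsilon>)"
        by (simp add: e1 e2)
    qed
    also have "\<dots> = (\<Sum>c\<in>F. w c * ?f c) + (\<Sum>c\<in>F. w c * ?h c) + W * \<epsilon>"
      unfolding W_def by (simp add: distrib_left sum.distrib sum_distrib_right)
    finally have g1: "g xs = (\<Sum>c\<in>F. w c * ?f c) + (\<Sum>c\<in>F. w c * ?h c) + W * \<epsilon>" .
    have "(\<Sum>c\<in>F. w c * ?h c) \<le> (\<Sum>c\<in>F. w c * (- P xs))"
      using Fdec Psi_le[OF xs] F(3) by (intro sum_mono mult_left_mono) auto
    also have "\<dots> = - W * P xs" unfolding W_def by (simp add: sum_distrib_right sum_negf)
    finally have h1: "(\<Sum>c\<in>F. w c * ?h c) \<le> - W * P xs" .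
    have "(\<Sum>c\<in>F. w c * ?f c) \<le> (\<Sum>c\<in>F. w c * P xs)"
      using Fdec Phi_le[OF xs] F(3) by (intro sum_mono mult_left_mono) auto
    also have "\<dots> = W * P xs" unfolding W_def by (simp add: sum_distrib_right)
    finally have f1: "(\<Sum>c\<in>F. w c * ?f c) \<le> W * P xs" .
    have f2: "(\<Sum>c\<in>F. w c * ?f c) > W * (P xs - \<epsilon>)"
      using gpos[OF xs] g1 h1 by (simp add: algebra_simps)
    show "P xs - \<epsilon> < eval M (asg M xs) \<chi> \<and> eval M (asg M xs) \<chi> \<le> P xs"
      unfolding ev using f1 f2 Wpos by (simp add: field_simps)
  qed
  then show ?thesis using \<chi> by blast
qed

theorem mainTheorem12:
  fixes L :: "('f, 'r) lang" and M :: "('a, 'f, 'r) struct"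
    and n :: nat and P :: "'a list \<Rightarrow> real"
  assumes "is_structure L M"
    and "aleph0_saturated L M"
  shows "definable L M n P \<longleftrightarrow>
           type_definable_epigraph L M n P \<and> type_definable_epigraph L M n (\<lambda>xs. - P xs)"
proof
  assume "definable L M n P"
  then show "type_definable_epigraph L M n P \<and> type_definable_epigraph L M n (\<lambda>xs. - P xs)"
    using def_epi def_neg by blast
next
  assume "type_definable_epigraph L M n P \<and> type_definable_epigraph L M n (\<lambda>xs. - P xs)"
  then obtain \<Phi> \<Psi> :: "('f, 'r) afml set" where
    Phi: "\<forall>\<phi>\<in>\<Phi>. wf_fml L \<phi> \<and> fv \<phi> \<subseteq> {..<n}"
      "\<forall>xs\<in>tuples M n. \<forall>r::real. P xs \<le> r \<longleftrightarrow> (\<forall>\<phi>\<in>\<Phi>. eval M (asg M xs) \<phi> \<le> r)"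
    and Psi: "\<forall>\<phi>\<in>\<Psi>. wf_fml L \<phi> \<and> fv \<phi> \<subseteq> {..<n}"
      "\<forall>xs\<in>tuples M n. \<forall>r::real. - P xs \<le> r \<longleftrightarrow> (\<forall>\<phi>\<in>\<Psi>. eval M (asg M xs) \<phi> \<le> r)"
    unfolding type_definable_epigraph_def by auto
  have "\<forall>k. \<exists>\<chi>. wf_fml L \<chi> \<and> fv \<chi> \<subseteq> {..<n} \<and>
     (\<forall>xs\<in>tuples M n. P xs - 1 / (real k + 1) < eval M (asg M xs) \<chi> \<and> eval M (asg M xs) \<chi> \<le> P xs)"
    using approx[OF assms Phi Psi] by simp
  then obtain \<chi> where \<chi>: "\<forall>k. wf_fml L (\<chi> k) \<and> fv (\<chi> k) \<subseteq> {..<n} \<and>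
     (\<forall>xs\<in>tuples M n. P xs - 1 / (real k + 1) < eval M (asg M xs) (\<chi> k) \<and> eval M (asg M xs) (\<chi> k) \<le> P xs)"
    by metis
  have "\<forall>\<epsilon>>0. \<exists>K. \<forall>k\<ge>K. \<forall>xs\<in>tuples M n. \<bar>eval M (asg M xs) (\<chi> k) - P xs\<bar> < \<epsilon>"
  proof (intro allI impI)
    fix \<epsilon> :: real assume "\<epsilon> > 0"
    then obtain K :: nat where K: "1 / (real K + 1) < \<epsilon>"
      by (metis add.commute nat_approx_posE of_nat_Suc)
    { fix k xs assume "k \<ge> K" "xs \<in> tuples M n"
      then have "1 / (real k + 1) \<le> 1 / (real K + 1)" by (simp add: frac_le)
      then have "\<bar>eval M (asg M xs) (\<chi> k) - P xs\<bar> < \<epsilon>" using \<chi> K \<open>xs \<in> tuples M n\<close>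
        by (smt (verit)) }
    then show "\<exists>K. \<forall>k\<ge>K. \<forall>xs\<in>tuples M n. \<bar>eval M (asg M xs) (\<chi> k) - P xs\<bar> < \<epsilon>" by blast
  qed
  then show "definable L M n P" unfolding definable_def using \<chi> by blast
qed

end
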